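(* Let $p(x) \in \mathbb{R}[x]$ be a real-rooted polynomial of degree $n \geq 2$ with positive leading coefficient, and let $\mu_1 \leq \mu_2 \leq \dots \leq \mu_n$ be its roots (with multiplicity). Let $P(x) = \int_0^x p(y)\,dy$. Let $h_1 \leq \dots \leq h_n$ be real numbers such that the multisets $\{h_1, \dots, h_n\}$ and $\{-P(\mu_1), \dots, -P(\mu_n)\}$ are equal. Let $k = \lfloor n/2 \rfloor$ and let $h$ be a real number with $h_k \leq h \leq h_{k+1}$. Suppose that $P(x)+h$ is real-rooted, and let $C$ be a real number. Then $P(x)+C$ is real-rooted if and only if $h_k \leq C \leq h_{k+1}$.
   Context: A nonzero polynomial in $\mathbb{R}[x]$ is called real-rooted if all of its complex roots are real. *)

theory Defs
  imports "HOL-Computational_Algebra.Polynomial"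
begin

definition real_rooted :: "real poly \<Rightarrow> bool" where
  "real_rooted p \<longleftrightarrow> p \<noteq> 0 \<and>
     (\<forall>z::complex. poly (map_poly of_real p) z = 0 \<longrightarrow> z \<in> \<real>)"

text \<open>The antiderivative P(x) = int_0^x p(y) dy, as a polynomial:
  coefficient i+1 of P is coeff p i / (i+1), constant term 0.\<close>
definition poly_antideriv :: "real poly \<Rightarrow> real poly" where
  "poly_antideriv p = pCons 0 (Poly (map (\<lambda>i. coeff p i / real (Suc i)) [0..<Suc (degree p)]))"

end

theory Submission
  imports Defs "HOL-Computational_Algebra.Fundamental_Theorem_Algebra"
begin

lemma size_filter_split:
  "size (filter_mset P M) = size (filter_mset (\<lambda>x. P x \<and> R x) M) + size (filter_mset (\<lambda>x. P x \<and> \<not> R x) M)"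
  by (induction M) auto

lemma size_filter_mono:
  assumes "\<And>x. P x \<Longrightarrow> R x" shows "size (filter_mset P M) \<le> size (filter_mset R M)"
  using assms by (induction M) auto

lemma count_le_size_filter: "P x \<Longrightarrow> count M x \<le> size (filter_mset P M)"
  by (induction M) auto

lemma size_filter_pos: "x \<in># M \<Longrightarrow> P x \<Longrightarrow> 1 \<le> size (filter_mset P M)"
  by (induction M) auto

lemma size_filter_image_mset_set:
  assumes "finite A"
  shows "size (filter_mset P (image_mset f (mset_set A))) = card {j\<in>A. P (f j)}"
  using assms
proof (induction A rule: finite_induct)
  case (insert x A)
  have "{j \<in> insert x A. P (f j)} = (if P (f x) then insert x {j\<in>A. P (f j)} else {j\<in>A. P (f j)})"
    by auto
  then show ?case using insert by auto
qed auto

lemma map_poly_of_real_mult: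
  "map_poly (of_real :: real \<Rightarrow> complex) (p * q) = map_poly of_real p * map_poly of_real q"
  by (simp add: poly_eq_iff coeff_mult coeff_map_poly)

lemma poly_decomp_proots:
  fixes p :: "real poly"
  shows "p \<noteq> 0 \<Longrightarrow> \<exists>r. p = (\<Prod>x\<in>#proots p. [:-x,1:]) * r \<and> (\<forall>x. poly r x \<noteq> 0)"
proof (induction p rule: poly_root_order_induct)
  case (no_roots p)
  then have "proots p = {#}" by (simp add: multiset_eqI order_root)
  then show ?case using no_roots by auto
next
  case (root p x n)
  then have p0: "p \<noteq> 0" by auto
  then obtain r where r: "p = (\<Prod>x\<in>#proots p. [:-x,1:]) * r" "\<forall>x. poly r x \<noteq> 0" using root by auto
  have "proots ([:-x,1:]^n * p) = replicate_mset n x + proots p"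
    using p0 by (simp add: proots_mult proots_power)
  then show ?case using r by (intro exI[of _ r]) (simp add: mult.assoc)
qed auto

lemma degree_prod_linear: "degree (\<Prod>x\<in>#M. [:-x,1::real:]) = size M"
proof (induction M)
  case (add x M)
  have "(\<Prod>x\<in>#M. [:-x,1::real:]) \<noteq> 0" by (auto simp add: prod_mset_zero_iff)
  have "degree ([:-x,1::real:] * (\<Prod>x\<in>#M. [:-x,1::real:])) = 1 + degree (\<Prod>x\<in>#M. [:-x,1::real:])"
    using \<open>(\<Prod>x\<in>#M. [:-x,1::real:]) \<noteq> 0\<close> by (subst degree_mult_eq) auto
  then show ?case using add by (simp only: prod_mset.add_mset image_mset_add_mset) simp
qed auto

lemma map_prod_linear_root:
  "poly (map_poly (of_real :: real \<Rightarrow> complex) (\<Prod>x\<in>#M. [:-x,1:])) z = 0 \<Longrightarrow> z \<in> \<real>"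
proof (induction M)
  case empty then show ?case by simp
next
  case (add x M)
  have "map_poly (of_real :: real \<Rightarrow> complex) [:-x,1:] = [:-of_real x, 1:]"
    by (simp add: map_poly_pCons)
  have "poly (map_poly (of_real :: real \<Rightarrow> complex) (\<Prod>y\<in>#add_mset x M. [:-y,1:])) z
      = (z - of_real x) * poly (map_poly of_real (\<Prod>y\<in>#M. [:-y,1:])) z"
    by (simp only: prod_mset.add_mset image_mset_add_mset map_poly_of_real_mult poly_mult \<open>map_poly (of_real :: real \<Rightarrow> complex) [:-x,1:] = [:-of_real x, 1:]\<close>) simp
  then show ?case using add by auto
qed

lemma real_rooted_iff_size:
  "real_rooted Q \<longleftrightarrow> Q \<noteq> 0 \<and> size (proots Q) = degree Q"
proof
  assume rr: "real_rooted Q"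
  then have Q0: "Q \<noteq> 0" by (simp add: real_rooted_def)
  obtain r where r: "Q = (\<Prod>x\<in>#proots Q. [:-x,1:]) * r" "\<forall>x. poly r x \<noteq> 0"
    using poly_decomp_proots[OF Q0] by blast
  have "degree r = 0"
  proof (rule ccontr)
    assume "degree r \<noteq> 0"
    then have "\<not> constant (poly (map_poly (of_real :: real \<Rightarrow> complex) r))"
      by (subst constant_degree) (simp add: degree_map_poly)
    then obtain z where z: "poly (map_poly (of_real :: real \<Rightarrow> complex) r) z = 0"
      using fundamental_theorem_of_algebra by blast
    then have "poly (map_poly of_real Q) z = 0"
      by (subst r(1)) (simp add: map_poly_of_real_mult)
    then have "z \<in> \<real>" using rr by (simp add: real_rooted_def)
    then obtain x where "z = of_real x" by (auto elim: Reals_cases)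
    moreover have "poly (map_poly (of_real :: real \<Rightarrow> complex) r) (of_real x) = of_real (poly r x)"
      by (induction r) (auto simp: map_poly_pCons)
    ultimately show False using z r(2) by simp
  qed
  have "r \<noteq> 0" using r Q0 by auto
  have "degree Q = degree ((\<Prod>x\<in>#proots Q. [:-x,1:]) * r)" using r(1) by metis
  also have "\<dots> = size (proots Q)"
    using \<open>degree r = 0\<close> \<open>r \<noteq> 0\<close> by (subst degree_mult_eq) (auto simp: prod_mset_zero_iff degree_prod_linear)
  finally have "degree Q = size (proots Q)" .
  then show "Q \<noteq> 0 \<and> size (proots Q) = degree Q" using Q0 by simp
next
  assume h: "Q \<noteq> 0 \<and> size (proots Q) = degree Q"
  then obtain r where r: "Q = (\<Prod>x\<in>#proots Q. [:-x,1:]) * r" "\<forall>x. poly r x \<noteq> 0"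
    using poly_decomp_proots by blast
  have "r \<noteq> 0" using r h by auto
  have "degree Q = degree ((\<Prod>x\<in>#proots Q. [:-x,1:]) * r)" using r(1) by metis
  also have "\<dots> = size (proots Q) + degree r"
    using \<open>r \<noteq> 0\<close> by (subst degree_mult_eq) (auto simp: prod_mset_zero_iff degree_prod_linear)
  finally have "degree r = 0" using h by simp
  then obtain c where c: "r = [:c:]" by (meson degree_eq_zeroE)
  show "real_rooted Q" unfolding real_rooted_def
  proof (intro conjI allI impI)
    fix z :: complex assume "poly (map_poly of_real Q) z = 0"
    moreover have "poly (map_poly of_real Q) z = poly (map_poly of_real (\<Prod>x\<in>#proots Q. [:-x,1:])) z * poly (map_poly (of_real :: real \<Rightarrow> complex) r) z"
      by (metis map_poly_of_real_mult poly_mult r(1))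
    moreover have "poly (map_poly (of_real :: real \<Rightarrow> complex) r) z = of_real c"
      by (simp add: c map_poly_pCons)
    ultimately have "poly (map_poly of_real (\<Prod>x\<in>#proots Q. [:-x,1:])) z * of_real c = 0"
      by simp
    moreover have "c \<noteq> 0" using \<open>r \<noteq> 0\<close> c by auto
    ultimately show "z \<in> \<real>" using map_prod_linear_root by auto
  qed (use h in auto)
qed

lemma pderiv_antideriv: "pderiv (poly_antideriv p) = p"
proof (rule poly_eqI)
  fix i
  show "coeff (pderiv (poly_antideriv p)) i = coeff p i"
  proof (cases "i < Suc (degree p)")
    case True
    then have "map (\<lambda>i. coeff p i / real (Suc i)) [0..<Suc (degree p)] ! i = coeff p i / real (Suc i)"
      by (simp del: upt_Suc)
    then show ?thesis using True by (simp add: coeff_pderiv poly_antideriv_def nth_default_def del: upt_Suc)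
  next
    case False
    then show ?thesis by (simp add: coeff_pderiv poly_antideriv_def nth_default_def coeff_eq_0)
  qed
qed

lemma size_filter_disj_le:
  assumes "\<And>x. P1 x \<Longrightarrow> P x" "\<And>x. P2 x \<Longrightarrow> P x" "\<And>x. P1 x \<Longrightarrow> \<not> P2 x"
  shows "size (filter_mset P1 M) + size (filter_mset P2 M) \<le> size (filter_mset P M)"
  using assms by (induction M) auto

lemma size_three_way:
  fixes a :: "'a::linorder"
  shows "size M = size (filter_mset (\<lambda>y. y < a) M) + size (filter_mset (\<lambda>y. y > a) M) + count M a"
  by (induction M) auto

lemma size_filter_insert_le:
  "size (filter_mset (\<lambda>x. x \<in> insert b A) M) \<le> size (filter_mset (\<lambda>x. x \<in> A) M) + count M b"
  by (induction M) auto

lemma rolle_count: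
  fixes Q :: "real poly"
  assumes Q0: "Q \<noteq> 0" and p0: "pderiv Q \<noteq> 0" and fin: "finite Z"
  shows "(\<forall>z\<in>Z. poly Q z = 0) \<longrightarrow> (\<forall>lo hi. (\<forall>z\<in>Z. lo \<le> z \<and> z \<le> hi) \<longrightarrow>
     size (filter_mset (\<lambda>x. x \<in> Z) (proots Q)) \<le> 1 + size (filter_mset (\<lambda>w. lo \<le> w \<and> w \<le> hi) (proots (pderiv Q))))"
  using fin
proof (induction Z rule: finite_linorder_max_induct)
  case empty
  then show ?case by simp
next
  case (insert b A)
  show ?case
  proof (intro impI allI)
    fix lo hi
    assume roots: "\<forall>z\<in>insert b A. poly Q z = 0"
      and bds: "\<forall>z\<in>insert b A. lo \<le> z \<and> z \<le> hi"
    let ?P = "proots (pderiv Q)"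
    have ob: "count (proots Q) b = Suc (count ?P b)"
      using roots Q0 p0 order_pderiv[of Q b] by simp
    have cb: "count ?P b \<le> size (filter_mset (\<lambda>w. lo \<le> w \<and> w \<le> hi) ?P)"
      using bds by (intro count_le_size_filter) auto
    have split1: "size (filter_mset (\<lambda>x. x \<in> insert b A) (proots Q)) \<le> size (filter_mset (\<lambda>x. x \<in> A) (proots Q)) + count (proots Q) b"
      by (rule size_filter_insert_le)
    show "size (filter_mset (\<lambda>x. x \<in> insert b A) (proots Q)) \<le> 1 + size (filter_mset (\<lambda>w. lo \<le> w \<and> w \<le> hi) ?P)"
    proof (cases "A = {}")
      case True
      then show ?thesis using split1 ob cb by simp
    next
      case False
      define m where "m = Max A"
      have mA: "m \<in> A" using False insert.hyps(1) m_def by simp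
      have mb: "m < b" using mA insert.hyps(2) by auto
      have Am: "\<forall>z\<in>A. z \<le> m" using insert.hyps(1) m_def by simp
      have IH: "size (filter_mset (\<lambda>x. x \<in> A) (proots Q)) \<le> 1 + size (filter_mset (\<lambda>w. lo \<le> w \<and> w \<le> m) ?P)"
        using insert.IH roots bds Am by auto
      obtain w0 where w0: "m < w0" "w0 < b" "poly Q b - poly Q m = (b - m) * poly (pderiv Q) w0"
        using poly_MVT[OF mb] by blast
      have "poly (pderiv Q) w0 = 0" using w0 roots mA mb by simp
      then have w0in: "w0 \<in># ?P" using p0 by simp
      have lom: "lo \<le> m" using bds mA by auto
      have s1: "1 \<le> size (filter_mset (\<lambda>w. m < w \<and> w < b) ?P)"
        using w0in w0 by (intro size_filter_pos) auto
      have "size (filter_mset (\<lambda>w. lo \<le> w \<and> w \<le> m) ?P) + size (filter_mset (\<lambda>w. m < w \<and> w < b) ?P)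
            \<le> size (filter_mset (\<lambda>w. lo \<le> w \<and> w < b) ?P)"
        using mb lom by (intro size_filter_disj_le) auto
      moreover have "size (filter_mset (\<lambda>w. lo \<le> w \<and> w < b) ?P) + size (filter_mset (\<lambda>w. w = b) ?P)
            \<le> size (filter_mset (\<lambda>w. lo \<le> w \<and> w \<le> hi) ?P)"
        using bds by (intro size_filter_disj_le) auto
      moreover have "size (filter_mset (\<lambda>w. w = b) ?P) = count ?P b"
        by (simp add: filter_eq_replicate_mset)
      ultimately show ?thesis using split1 ob IH s1 by linarith
    qed
  qed
qed

lemma rolle_count_below:
  fixes Q :: "real poly"
  assumes Q0: "Q \<noteq> 0" and p0: "pderiv Q \<noteq> 0"
  shows "size (filter_mset (\<lambda>y. y < a) (proots Q)) \<le> 1 + size (filter_mset (\<lambda>y. y < a) (proots (pderiv Q)))"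
proof -
  define Z where "Z = set_mset (filter_mset (\<lambda>y. y < a) (proots Q))"
  have fin: "finite Z" using Z_def by simp
  have eq: "filter_mset (\<lambda>x. x \<in> Z) (proots Q) = filter_mset (\<lambda>y. y < a) (proots Q)"
    unfolding Z_def by (rule filter_mset_cong) auto
  show ?thesis
  proof (cases "Z = {}")
    case True
    then have "filter_mset (\<lambda>y. y < a) (proots Q) = {#}" using eq by simp
    then have "size (filter_mset (\<lambda>y. y < a) (proots Q)) = 0" by (metis size_empty)
    then show ?thesis by linarith
  next
    case False
    have roots: "\<forall>z\<in>Z. poly Q z = 0" using Z_def Q0 by auto
    have bds: "\<forall>z\<in>Z. Min Z \<le> z \<and> z \<le> Max Z" using fin by simp
    have "Max Z \<in> Z" using fin False by simp
    then have Ma: "Max Z < a" using Z_def by auto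
    have "size (filter_mset (\<lambda>x. x \<in> Z) (proots Q)) \<le> 1 + size (filter_mset (\<lambda>w. Min Z \<le> w \<and> w \<le> Max Z) (proots (pderiv Q)))"
      using rolle_count[OF Q0 p0 fin] roots bds by blast
    also have "\<dots> \<le> 1 + size (filter_mset (\<lambda>y. y < a) (proots (pderiv Q)))"
      using Ma by (intro add_left_mono size_filter_mono) auto
    finally show ?thesis using eq by simp
  qed
qed

lemma rolle_count_above:
  fixes Q :: "real poly"
  assumes Q0: "Q \<noteq> 0" and p0: "pderiv Q \<noteq> 0"
  shows "size (filter_mset (\<lambda>y. y > a) (proots Q)) \<le> 1 + size (filter_mset (\<lambda>y. y > a) (proots (pderiv Q)))"
proof -
  define Z where "Z = set_mset (filter_mset (\<lambda>y. y > a) (proots Q))"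
  have fin: "finite Z" using Z_def by simp
  have eq: "filter_mset (\<lambda>x. x \<in> Z) (proots Q) = filter_mset (\<lambda>y. y > a) (proots Q)"
    unfolding Z_def by (rule filter_mset_cong) auto
  show ?thesis
  proof (cases "Z = {}")
    case True
    then have "filter_mset (\<lambda>y. y > a) (proots Q) = {#}" using eq by simp
    then have "size (filter_mset (\<lambda>y. y > a) (proots Q)) = 0" by (metis size_empty)
    then show ?thesis by linarith
  next
    case False
    have roots: "\<forall>z\<in>Z. poly Q z = 0" using Z_def Q0 by auto
    have bds: "\<forall>z\<in>Z. Min Z \<le> z \<and> z \<le> Max Z" using fin by simp
    have "Min Z \<in> Z" using fin False by simp
    then have Ma: "Min Z > a" using Z_def by auto
    have "size (filter_mset (\<lambda>x. x \<in> Z) (proots Q)) \<le> 1 + size (filter_mset (\<lambda>w. Min Z \<le> w \<and> w \<le> Max Z) (proots (pderiv Q)))"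
      using rolle_count[OF Q0 p0 fin] roots bds by blast
    also have "\<dots> \<le> 1 + size (filter_mset (\<lambda>y. y > a) (proots (pderiv Q)))"
      using Ma by (intro add_left_mono size_filter_mono) auto
    finally show ?thesis using eq by simp
  qed
qed

lemma sign_prod_linear:
  fixes a :: real
  assumes "a \<notin># M"
  shows "(\<Prod>y\<in>#M. (a - y)) * (-1) ^ size (filter_mset (\<lambda>y. y > a) M) > 0"
  using assms
proof (induction M)
  case (add x M)
  then have IH: "(\<Prod>y\<in>#M. (a - y)) * (-1) ^ size (filter_mset (\<lambda>y. y > a) M) > 0" by simp
  have "x \<noteq> a" using add by auto
  show ?case
  proof (cases "x > a")
    case True
    have "(\<Prod>y\<in>#add_mset x M. (a - y)) * (-1) ^ size (filter_mset (\<lambda>y. y > a) (add_mset x M))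
       = (x - a) * ((\<Prod>y\<in>#M. (a - y)) * (-1) ^ size (filter_mset (\<lambda>y. y > a) M))"
      using True by (simp add: algebra_simps)
    moreover have "(x - a) * ((\<Prod>y\<in>#M. (a - y)) * (-1) ^ size (filter_mset (\<lambda>y. y > a) M)) > 0"
      using IH True by simp
    ultimately show ?thesis by linarith
  next
    case False
    then have "x < a" using \<open>x \<noteq> a\<close> by simp
    then show ?thesis using mult_pos_pos[OF _ IH, of "a - x"] False by (simp add: mult.assoc)
  qed
qed simp

locale setting =
  fixes Q p :: "real poly" and c :: real and n :: nat and mu :: "nat \<Rightarrow> real"
  assumes dQ: "pderiv Q = p"
    and pform: "p = smult c (\<Prod>i\<in>{1..n}. [:-mu i,1:])"
    and cpos: "c > 0" and n1: "1 \<le> n"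
    and srt: "\<And>i j. 1 \<le> i \<Longrightarrow> i \<le> j \<Longrightarrow> j \<le> n \<Longrightarrow> mu i \<le> mu j"
begin

lemma poly_p: "poly p x = c * (\<Prod>i\<in>{1..n}. (x - mu i))"
  by (simp add: pform poly_prod)

lemma p0: "p \<noteq> 0"
  using cpos by (auto simp: pform)

lemma Q0: "Q \<noteq> 0"
  using p0 dQ by auto

lemma sum_single_image: "finite A \<Longrightarrow> (\<Sum>i\<in>A. {#f i#}) = image_mset f (mset_set A)"
  by (induction A rule: finite_induct) auto

lemma proots_p: "proots p = image_mset mu (mset_set {1..n})"
proof -
  have "proots p = proots (\<Prod>i\<in>{1..n}. [:-mu i,1:])"
    using cpos by (simp add: pform)
  also have "\<dots> = (\<Sum>i\<in>{1..n}. proots [:-mu i,1:])"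
    by (rule proots_prod) auto
  also have "\<dots> = (\<Sum>i\<in>{1..n}. {#mu i#})"
    using proots_linear_factor[of "- mu _"] by simp
  finally show ?thesis by (simp add: sum_single_image)
qed

lemma filt_p: "size (filter_mset P (proots p)) = card {j\<in>{1..n}. P (mu j)}"
  by (simp add: proots_p size_filter_image_mset_set)

lemma count_p: "count (proots p) t = card {j\<in>{1..n}. mu j = t}"
proof -
  have "count (proots p) t = size (filter_mset (\<lambda>x. x = t) (proots p))"
    by (simp add: filter_eq_replicate_mset)
  then show ?thesis by (simp add: filt_p)
qed

lemma deg_p: "degree p = n"
  using cpos by (simp add: pform degree_prod_sum_eq)

lemma deg_Q: "degree Q = Suc n"
  using deg_p dQ n1 degree_pderiv[of Q] by simp

lemma order_Q: "poly Q t = 0 \<Longrightarrow> count (proots Q) t = Suc (count (proots p) t)"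
  using Q0 p0 dQ order_pderiv[of Q t] by simp

lemma event_pos: "\<exists>B. \<forall>x\<ge>B. poly Q x > 0"
proof -
  define M where "M = mu n + 1"
  have pM: "poly p y \<ge> c" if "y \<ge> M" for y
  proof -
    have "1 \<le> (\<Prod>i\<in>{1..n}. (y - mu i))"
    proof (rule prod_ge_1)
      fix i assume "i \<in> {1..n}"
      then have "mu i \<le> mu n" using srt by auto
      then show "1 \<le> y - mu i" using that M_def by simp
    qed
    then show ?thesis using cpos by (simp add: poly_p)
  qed
  define B where "B = M + \<bar>poly Q M\<bar> / c + 1"
  have "poly Q x > 0" if "x \<ge> B" for x
  proof -
    have "\<bar>poly Q M\<bar> / c \<ge> 0" using cpos by simp
    then have xM: "M < x" using that B_def by linarith
    obtain xi where xi: "M < xi" "xi < x" "poly Q x - poly Q M = (x - M) * poly p xi"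
      using poly_MVT[OF xM, of Q] dQ by blast
    have "(x - M) * poly p xi \<ge> (x - M) * c"
      using pM[of xi] xi xM by (intro mult_left_mono) auto
    moreover have "(x - M) * c \<ge> (\<bar>poly Q M\<bar> / c + 1) * c"
      using that B_def cpos by (intro mult_right_mono) auto
    moreover have "(\<bar>poly Q M\<bar> / c + 1) * c = \<bar>poly Q M\<bar> + c"
      using cpos by (simp add: field_simps)
    ultimately show ?thesis using xi cpos by linarith
  qed
  then show ?thesis by blast
qed

lemma left_sign: "\<exists>x. x < mu 1 \<and> (-1) ^ Suc n * poly Q x > 0"
proof -
  define L where "L = mu 1 - 1"
  define s :: real where "s = (-1) ^ n"
  have s2: "s * s = 1" unfolding s_def by (simp add: power_mult_distrib[symmetric])
  have sabs: "\<bar>s\<bar> = 1" unfolding s_def by simp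
  have pL: "s * poly p y \<ge> c" if "y \<le> L" for y
  proof -
    have ge1: "1 \<le> (\<Prod>i\<in>{1..n}. (mu i - y))"
    proof (rule prod_ge_1)
      fix i assume "i \<in> {1..n}"
      then have "mu 1 \<le> mu i" using srt by auto
      then show "1 \<le> mu i - y" using that L_def by simp
    qed
    have "(\<Prod>i\<in>{1..n}. (y - mu i)) = (\<Prod>i\<in>{1..n}. - (mu i - y))" by simp
    also have "\<dots> = s * (\<Prod>i\<in>{1..n}. (mu i - y))"
      unfolding prod_uminus s_def by simp
    finally have "s * poly p y = c * ((s * s) * (\<Prod>i\<in>{1..n}. (mu i - y)))"
      unfolding poly_p by (simp only: ac_simps)
    then have "s * poly p y = c * (\<Prod>i\<in>{1..n}. (mu i - y))" using s2 by simp
    moreover have "c * 1 \<le> c * (\<Prod>i\<in>{1..n}. (mu i - y))"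
      using cpos ge1 by (intro mult_left_mono) auto
    ultimately show ?thesis by simp
  qed
  define x where "x = L - \<bar>poly Q L\<bar> / c - 1"
  have "\<bar>poly Q L\<bar> / c \<ge> 0" using cpos by simp
  then have xL: "x < L" using x_def by linarith
  obtain xi where xi: "x < xi" "xi < L" "poly Q L - poly Q x = (L - x) * poly p xi"
    using poly_MVT[OF xL, of Q] dQ by blast
  have "(L - x) * (s * poly p xi) \<ge> (L - x) * c"
    using pL[of xi] xi xL by (intro mult_left_mono) auto
  moreover have "(L - x) * c = \<bar>poly Q L\<bar> + c"
    using cpos x_def by (simp add: field_simps)
  moreover have "(-1) ^ Suc n * poly Q x = - s * poly Q L + (L - x) * (s * poly p xi)"
  proof -
    have "(-1) ^ Suc n * poly Q x = - s * poly Q x" using s_def by simp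
    also have "\<dots> = - s * poly Q L + s * (poly Q L - poly Q x)" by (simp add: algebra_simps)
    also have "\<dots> = - s * poly Q L + (L - x) * (s * poly p xi)" using xi(3) by simp
    finally show ?thesis .
  qed
  moreover have "- s * poly Q L \<ge> - \<bar>poly Q L\<bar>"
  proof -
    have "\<bar>s * poly Q L\<bar> = \<bar>poly Q L\<bar>" using sabs by (simp add: abs_mult)
    then show ?thesis using abs_ge_self[of "s * poly Q L"] by linarith
  qed
  ultimately have "(-1) ^ Suc n * poly Q x > 0" using cpos by linarith
  moreover have "x < mu 1" using xL L_def by simp
  ultimately show ?thesis by blast
qed

end

context setting
begin

definition SC where
  "SC \<longleftrightarrow> (\<forall>i\<in>{1..n}. (odd (n - i) \<longrightarrow> poly Q (mu i) \<ge> 0) \<and> (even (n - i) \<longrightarrow> poly Q (mu i) \<le> 0))"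

lemma M1:
  assumes sc: SC and i: "1 \<le> i" "i < n" and eq: "mu i = mu (Suc i)"
  shows "poly Q (mu i) = 0"
proof -
  have par: "n - i = Suc (n - Suc i)" using i by simp
  have a: "(odd (n - i) \<longrightarrow> poly Q (mu i) \<ge> 0) \<and> (even (n - i) \<longrightarrow> poly Q (mu i) \<le> 0)"
    using sc i unfolding SC_def by auto
  have b: "(odd (n - Suc i) \<longrightarrow> poly Q (mu i) \<ge> 0) \<and> (even (n - Suc i) \<longrightarrow> poly Q (mu i) \<le> 0)"
    using sc i eq unfolding SC_def by (metis atLeastAtMost_iff Suc_leI le_SucI)
  show ?thesis using a b par by (cases "even (n - Suc i)") auto
qed

lemma M1':
  assumes sc: SC and i: "i \<in> {1..n}" and nz: "poly Q (mu i) \<noteq> 0"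
  shows "{j\<in>{1..n}. mu j = mu i} = {i}"
proof -
  have "j = i" if j: "j \<in> {1..n}" "mu j = mu i" for j
  proof (rule ccontr)
    assume "j \<noteq> i"
    then consider "j < i" | "i < j" by linarith
    then show False
    proof cases
      case 1
      then have "mu j \<le> mu (i - 1)" "mu (i - 1) \<le> mu i" using srt[of j "i - 1"] srt[of "i - 1" i] j i by auto
      then have "mu (i - 1) = mu (Suc (i - 1))" using j 1 by simp
      then have "poly Q (mu (i - 1)) = 0" using M1[OF sc, of "i - 1"] 1 j i by simp
      then show False using nz \<open>mu (i - 1) = mu (Suc (i - 1))\<close> 1 j by simp
    next
      case 2
      then have "mu i \<le> mu (Suc i)" "mu (Suc i) \<le> mu j" using srt[of i "Suc i"] srt[of "Suc i" j] j i by auto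
      then have "mu i = mu (Suc i)" using j by simp
      then show False using M1[OF sc, of i] nz 2 i j by simp
    qed
  qed
  then show ?thesis using i by auto
qed

definition cnt where "cnt x = size (filter_mset (\<lambda>r. r \<le> x) (proots Q))"
definition pc where "pc x = card {j\<in>{1..n}. mu j \<le> x}"

lemma split_cnt:
  assumes "a < b"
  shows "cnt a + size (filter_mset (\<lambda>r. a < r \<and> r < b) (proots Q)) + count (proots Q) b \<le> cnt b"
proof -
  have "cnt a + size (filter_mset (\<lambda>r. a < r \<and> r < b) (proots Q)) \<le> size (filter_mset (\<lambda>r. r < b) (proots Q))"
    unfolding cnt_def using assms by (intro size_filter_disj_le) auto
  moreover have "size (filter_mset (\<lambda>r. r < b) (proots Q)) + size (filter_mset (\<lambda>r. r = b) (proots Q)) \<le> cnt b"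
    unfolding cnt_def by (intro size_filter_disj_le) auto
  moreover have "size (filter_mset (\<lambda>r. r = b) (proots Q)) = count (proots Q) b"
    by (simp add: filter_eq_replicate_mset)
  ultimately show ?thesis by linarith
qed

lemma root_in_cnt:
  assumes "poly Q r = 0" "P r"
  shows "1 \<le> size (filter_mset P (proots Q))"
  using assms Q0 by (intro size_filter_pos) auto

lemma sign_pow: "(-1::real) ^ m = (if even m then 1 else -1)"
  by simp

lemma claim:
  assumes sc: SC
  shows "1 \<le> i \<Longrightarrow> i \<le> n \<Longrightarrow> pc (mu i) + (if poly Q (mu i) = 0 then 1 else 0) \<le> cnt (mu i)"
proof (induction i)
  case 0
  then show ?case by simp
next
  case (Suc i)
  show ?case
  proof (cases "i = 0")
    case True
    define a where "a = mu 1"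
    have pca: "pc a = count (proots p) a"
    proof -
      have "{j\<in>{1..n}. mu j \<le> a} = {j\<in>{1..n}. mu j = a}"
        using srt a_def by (auto intro: antisym)
      then show ?thesis by (simp add: pc_def count_p)
    qed
    show ?thesis
    proof (cases "poly Q a = 0")
      case True
      have "count (proots Q) a \<le> cnt a" unfolding cnt_def by (intro count_le_size_filter) simp
      then show ?thesis using order_Q[OF True] pca \<open>i = 0\<close> a_def True by simp
    next
      case False
      have "{j\<in>{1..n}. mu j = a} = {1}" using M1'[OF sc, of 1] n1 False a_def by simp
      then have "pc a = 1" using pca count_p by simp
      obtain x where x: "x < a" "(-1) ^ Suc n * poly Q x > 0" using left_sign a_def by blast
      have sca: "(odd (n - 1) \<longrightarrow> poly Q a \<ge> 0) \<and> (even (n - 1) \<longrightarrow> poly Q a \<le> 0)"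
        using sc n1 a_def unfolding SC_def by auto
      have "poly Q x * poly Q a < 0"
      proof (cases "even n")
        case True
        then have "odd (n - 1)" using n1 by simp
        then have "poly Q a > 0" using sca False by simp
        moreover have "poly Q x < 0" using x True by simp
        ultimately show ?thesis by (simp add: mult_neg_pos)
      next
        case False
        then have "even (n - 1)" using n1 by simp
        then have "poly Q a < 0" using sca \<open>poly Q a \<noteq> 0\<close> by simp
        moreover have "poly Q x > 0" using x False by simp
        ultimately show ?thesis by (simp add: mult_pos_neg)
      qed
      then obtain r where r: "x < r" "r < a" "poly Q r = 0" using poly_IVT[OF x(1)] by blast
      have "1 \<le> cnt a" unfolding cnt_def using r by (intro root_in_cnt) auto
      then show ?thesis using \<open>pc a = 1\<close> False \<open>i = 0\<close> a_def by simp
    qed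
  next
    case False
    then have i1: "1 \<le> i" and iSn: "Suc i \<le> n" using Suc.prems by auto
    define a where "a = mu i"
    define b where "b = mu (Suc i)"
    have IH: "pc a + (if poly Q a = 0 then 1 else 0) \<le> cnt a" using Suc.IH i1 iSn a_def by simp
    have ab: "a \<le> b" using srt i1 iSn a_def b_def by simp
    show ?thesis
    proof (cases "a = b")
      case True
      then show ?thesis using IH a_def b_def by simp
    next
      case False
      then have ab: "a < b" using ab by simp
      have seteq: "{j\<in>{1..n}. mu j \<le> b} = {j\<in>{1..n}. mu j \<le> a} \<union> {j\<in>{1..n}. mu j = b}"
      proof -
        have "mu j \<le> a \<or> mu j = b" if "j \<in> {1..n}" "mu j \<le> b" for j
        proof (cases "j \<le> i")
          case True
          then show ?thesis using srt[of j i] that a_def iSn by auto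
        next
          case False
          then have "b \<le> mu j" using srt that b_def by auto
          then show ?thesis using that by simp
        qed
        then show ?thesis using ab by auto
      qed
      have pcb: "pc b = pc a + count (proots p) b"
        unfolding pc_def count_p seteq using ab by (subst card_Un_disjoint) auto
      have sp: "cnt a + size (filter_mset (\<lambda>r. a < r \<and> r < b) (proots Q)) + count (proots Q) b \<le> cnt b"
        using split_cnt[OF ab] .
      show ?thesis
      proof (cases "poly Q b = 0")
        case True
        then show ?thesis using order_Q[OF True] pcb IH sp b_def by (simp split: if_splits)
      next
        case qb: False
        have "{j\<in>{1..n}. mu j = b} = {Suc i}" using M1'[OF sc, of "Suc i"] iSn qb b_def by simp
        then have pcb1: "pc b = pc a + 1" using pcb count_p by simp
        show ?thesis
        proof (cases "poly Q a = 0")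
          case True
          then show ?thesis using IH sp pcb1 qb b_def by simp
        next
          case qa: False
          have sca: "(odd (n - i) \<longrightarrow> poly Q a \<ge> 0) \<and> (even (n - i) \<longrightarrow> poly Q a \<le> 0)"
            using sc i1 iSn a_def unfolding SC_def by auto
          have scb: "(odd (n - Suc i) \<longrightarrow> poly Q b \<ge> 0) \<and> (even (n - Suc i) \<longrightarrow> poly Q b \<le> 0)"
            using sc i1 iSn b_def unfolding SC_def by auto
          have par: "n - i = Suc (n - Suc i)" using iSn by simp
          have "poly Q a * poly Q b < 0"
          proof (cases "even (n - Suc i)")
            case True
            then have "poly Q a > 0" "poly Q b < 0" using sca scb par qa qb by auto
            then show ?thesis by (simp add: mult_pos_neg)
          next
            case False
            then have "poly Q a < 0" "poly Q b > 0" using sca scb par qa qb by auto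
            then show ?thesis by (simp add: mult_neg_pos)
          qed
          then obtain r where r: "a < r" "r < b" "poly Q r = 0" using poly_IVT[OF ab] by blast
          have "1 \<le> size (filter_mset (\<lambda>r. a < r \<and> r < b) (proots Q))"
            using r by (intro root_in_cnt) auto
          then show ?thesis using IH sp pcb1 qb qa b_def by simp
        qed
      qed
    qed
  qed
qed

lemma suff_size:
  assumes sc: SC
  shows "Suc n \<le> size (proots Q)"
proof -
  define a where "a = mu n"
  have cl: "pc a + (if poly Q a = 0 then 1 else 0) \<le> cnt a" using claim[OF sc, of n] n1 a_def by simp
  have "{j\<in>{1..n}. mu j \<le> a} = {1..n}" using srt a_def by auto
  then have pca: "pc a = n" by (simp add: pc_def)
  have cs: "cnt a \<le> size (proots Q)" unfolding cnt_def by (rule size_filter_mset_lesseq)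
  show ?thesis
  proof (cases "poly Q a = 0")
    case True
    then show ?thesis using cl pca cs by simp
  next
    case False
    have "poly Q a \<le> 0" using sc n1 a_def unfolding SC_def by auto
    then have qa: "poly Q a < 0" using False by simp
    obtain B where B: "\<forall>x\<ge>B. poly Q x > 0" using event_pos by blast
    define x where "x = max B (a + 1)"
    have "poly Q x > 0" using B x_def by simp
    moreover have "a < x" using x_def by simp
    ultimately obtain r where r: "a < r" "r < x" "poly Q r = 0" using poly_IVT_pos[of a x Q] qa by blast
    have "1 \<le> size (filter_mset (\<lambda>r. a < r) (proots Q))"
      using r by (intro root_in_cnt) auto
    moreover have "cnt a + size (filter_mset (\<lambda>r. a < r) (proots Q)) \<le> size (filter_mset (\<lambda>_. True) (proots Q))"
      unfolding cnt_def by (intro size_filter_disj_le) auto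
    ultimately show ?thesis using cl pca False by simp
  qed
qed

lemma suff: "SC \<Longrightarrow> real_rooted Q"
  using suff_size size_proots_le[of Q] deg_Q Q0 by (simp add: real_rooted_iff_size)

end

context setting
begin

lemma nec:
  assumes rr: "real_rooted Q"
  shows SC
proof -
  let ?R = "proots Q"
  have szR: "size ?R = Suc n" using rr deg_Q by (simp add: real_rooted_iff_size)
  obtain r where r: "Q = (\<Prod>x\<in>#?R. [:-x,1:]) * r" "\<forall>x. poly r x \<noteq> 0"
    using poly_decomp_proots[OF Q0] by blast
  have r0: "r \<noteq> 0" using r Q0 by auto
  have "degree Q = degree ((\<Prod>x\<in>#?R. [:-x,1:]) * r)" using r(1) by metis
  also have "\<dots> = size ?R + degree r"
    using r0 by (subst degree_mult_eq) (auto simp: prod_mset_zero_iff degree_prod_linear)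
  finally have "degree r = 0" using szR deg_Q by simp
  then obtain k where k: "r = [:k:]" by (meson degree_eq_zeroE)
  have polyQ: "poly Q x = (\<Prod>y\<in>#?R. (x - y)) * k" for x
  proof -
    have "poly Q x = poly (\<Prod>y\<in>#?R. [:-y,1:]) x * poly r x" using r(1) by (metis poly_mult)
    then show ?thesis using k by (simp add: poly_prod_mset)
  qed
  obtain B where B: "\<forall>x\<ge>B. poly Q x > 0" using event_pos by blast
  have kpos: "k > 0"
  proof -
    have "B \<notin># ?R" using B Q0 by auto
    moreover have feq: "filter_mset (\<lambda>y. y > B) ?R = {#}"
    proof -
      have "\<not> y > B" if "y \<in># ?R" for y
      proof -
        have "poly Q y = 0" using that Q0 by simp
        then show ?thesis using B by (metis less_imp_le less_irrefl)
      qed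
      then show ?thesis by (simp add: filter_mset_eq_conv)
    qed
    ultimately have sp: "(\<Prod>y\<in>#?R. (B - y)) * (-1) ^ size (filter_mset (\<lambda>y. y > B) ?R) > 0"
      using sign_prod_linear[of B ?R] by blast
    have sz: "size (filter_mset (\<lambda>y. y > B) ?R) = 0" using feq by (metis size_empty)
    have "(\<Prod>y\<in>#?R. (B - y)) > 0" using sp unfolding sz by simp
    moreover have "(\<Prod>y\<in>#?R. (B - y)) * k > 0" using B polyQ[of B] by (metis order_refl)
    ultimately show ?thesis by (simp add: zero_less_mult_iff)
  qed
  show SC unfolding SC_def
  proof (intro ballI conjI impI)
    fix i assume i: "i \<in> {1..n}"
    define a where "a = mu i"
    define u where "u = size (filter_mset (\<lambda>y. y > a) ?R)"
    define d where "d = size (filter_mset (\<lambda>y. y < a) ?R)"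
    have key: "poly Q a \<noteq> 0 \<Longrightarrow> poly Q a * (-1) ^ Suc (n - i) > 0"
    proof -
      assume qa: "poly Q a \<noteq> 0"
      then have aR: "a \<notin># ?R" using Q0 by simp
      have "card {j\<in>{1..n}. mu j < a} \<le> card {1..<i}"
      proof (rule card_mono)
        show "{j\<in>{1..n}. mu j < a} \<subseteq> {1..<i}"
        proof
          fix j assume j: "j \<in> {j\<in>{1..n}. mu j < a}"
          have "\<not> i \<le> j" using srt[of i j] i j a_def by auto
          then show "j \<in> {1..<i}" using j by auto
        qed
      qed simp
      then have d1: "d \<le> i"
        using rolle_count_below[OF Q0, of a] dQ p0 filt_p[of "\<lambda>y. y < a"] d_def i by (simp; linarith)
      have "card {j\<in>{1..n}. mu j > a} \<le> card {Suc i..n}"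
      proof (rule card_mono)
        show "{j\<in>{1..n}. mu j > a} \<subseteq> {Suc i..n}"
        proof
          fix j assume j: "j \<in> {j\<in>{1..n}. mu j > a}"
          have "\<not> j \<le> i" using srt[of j i] i j a_def by auto
          then show "j \<in> {Suc i..n}" using j by auto
        qed
      qed simp
      then have u1: "u \<le> Suc (n - i)"
        using rolle_count_above[OF Q0, of a] dQ p0 filt_p[of "\<lambda>y. y > a"] u_def i by (simp; linarith)
      have "size ?R = d + u + count ?R a" unfolding d_def u_def by (rule size_three_way)
      then have "d + u = Suc n" using szR aR by (simp add: not_in_iff)
      then have ueq: "u = Suc (n - i)" using d1 u1 i by (simp; linarith)
      have "(\<Prod>y\<in>#?R. (a - y)) * (-1) ^ u > 0" using sign_prod_linear[OF aR] u_def by simp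
      then have "((\<Prod>y\<in>#?R. (a - y)) * (-1) ^ u) * k > 0" using kpos by simp
      then show ?thesis using polyQ[of a] ueq by (simp add: ac_simps)
    qed
    show "odd (n - i) \<Longrightarrow> poly Q (mu i) \<ge> 0"
    proof -
      assume o: "odd (n - i)"
      show "poly Q (mu i) \<ge> 0"
      proof (cases "poly Q a = 0")
        case False
        then show ?thesis using key o a_def by simp
      qed (simp add: a_def)
    qed
    show "even (n - i) \<Longrightarrow> poly Q (mu i) \<le> 0"
    proof -
      assume o: "even (n - i)"
      show "poly Q (mu i) \<le> 0"
      proof (cases "poly Q a = 0")
        case False
        then have "poly Q a * (-1) > 0" using key o by simp
        then show ?thesis using a_def by simp
      qed (simp add: a_def)
    qed
  qed
qed

lemma char: "real_rooted Q \<longleftrightarrow> SC"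
  using nec suff by blast

end

lemma card_parity:
  "card {i\<in>{1..n}. odd (n - i)} = n div 2 \<and> card {i\<in>{1..n}. even (n - i)} = n - n div 2"
proof (induction n)
  case 0
  then show ?case by simp
next
  case (Suc n)
  have e1: "{i\<in>{1..Suc n}. odd (Suc n - i)} = {i\<in>{1..n}. even (n - i)}"
  proof -
    have "odd (Suc n - i) \<longleftrightarrow> even (n - i)" if "i \<le> n" for i
      using that by (simp add: Suc_diff_le)
    then show ?thesis by (auto simp: le_Suc_eq)
  qed
  have e2: "{i\<in>{1..Suc n}. even (Suc n - i)} = insert (Suc n) {i\<in>{1..n}. odd (n - i)}"
  proof -
    have "even (Suc n - i) \<longleftrightarrow> odd (n - i)" if "i \<le> n" for i
      using that by (simp add: Suc_diff_le)
    then show ?thesis by (auto simp: le_Suc_eq)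
  qed
  have "card (insert (Suc n) {i\<in>{1..n}. odd (n - i)}) = Suc (card {i\<in>{1..n}. odd (n - i)})"
    by (subst card_insert_disjoint) auto
  then show ?case using Suc e1 e2 by simp presburger
qed

lemma card_mset_map:
  "card {j\<in>{1..n}. P (f j)} = size (filter_mset P (mset (map f [1..<Suc n])))"
proof -
  have "mset (map f [1..<Suc n]) = image_mset f (mset_set {1..n})"
    by (simp del: upt_Suc add: mset_map mset_upt atLeastLessThanSuc_atLeastAtMost)
  then show ?thesis by (simp add: size_filter_image_mset_set)
qed

lemma combinatorial:
  fixes n :: nat and hs g :: "nat \<Rightarrow> real" and h C :: real
  assumes n2: "n \<ge> 2"
    and hs_sorted: "\<And>i j. 1 \<le> i \<Longrightarrow> i \<le> j \<Longrightarrow> j \<le> n \<Longrightarrow> hs i \<le> hs j"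
    and cnt_eq: "\<And>P. card {j\<in>{1..n}. P (hs j)} = card {j\<in>{1..n}. P (g j)}"
    and hLo: "\<forall>i\<in>{1..n}. odd (n - i) \<longrightarrow> g i \<le> h"
    and hHi: "\<forall>i\<in>{1..n}. even (n - i) \<longrightarrow> h \<le> g i"
  shows "(\<forall>i\<in>{1..n}. (odd (n - i) \<longrightarrow> g i \<le> C) \<and> (even (n - i) \<longrightarrow> C \<le> g i))
         \<longleftrightarrow> hs (n div 2) \<le> C \<and> C \<le> hs (n div 2 + 1)"
proof -
  define k where "k = n div 2"
  define Lo where "Lo = {i\<in>{1..n}. odd (n - i)}"
  define Hi where "Hi = {i\<in>{1..n}. even (n - i)}"
  have cLo: "card Lo = k" unfolding Lo_def k_def by (rule conjunct1[OF card_parity])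
  have cHi: "card Hi = n - k" unfolding Hi_def k_def by (rule conjunct2[OF card_parity])
  have k1: "1 \<le> k" and kn: "k + 1 \<le> n" using n2 k_def by auto
  have finLo: "finite Lo" and finHi: "finite Hi" using Lo_def Hi_def by auto
  have A: "(\<forall>i\<in>Lo. g i \<le> C) \<longleftrightarrow> hs k \<le> C"
  proof
    assume L: "\<forall>i\<in>Lo. g i \<le> C"
    show "hs k \<le> C"
    proof (rule ccontr)
      assume "\<not> hs k \<le> C"
      then have "C < hs j" if "j \<in> {k..n}" for j using hs_sorted[of k j] k1 that by auto
      then have "{k..n} \<subseteq> {j\<in>{1..n}. C < hs j}" using k1 by auto
      then have "card {k..n} \<le> card {j\<in>{1..n}. C < hs j}" by (intro card_mono) auto
      moreover have "{j\<in>{1..n}. C < g j} \<subseteq> Hi" using L Lo_def Hi_def by auto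
      then have "card {j\<in>{1..n}. C < g j} \<le> card Hi" using finHi by (intro card_mono)
      ultimately show False using cnt_eq[of "\<lambda>x. C < x"] cHi kn by simp
    qed
  next
    assume hk: "hs k \<le> C"
    show "\<forall>i\<in>Lo. g i \<le> C"
    proof (rule ccontr)
      assume "\<not> (\<forall>i\<in>Lo. g i \<le> C)"
      then obtain i0 where i0: "i0 \<in> Lo" "g i0 > C" by auto
      have gi0: "g i0 \<le> h" using i0 hLo unfolding Lo_def by blast
      have "C < g j" if "j \<in> insert i0 Hi" for j
      proof (cases "j = i0")
        case False
        then have "h \<le> g j" using that hHi unfolding Hi_def by blast
        then show ?thesis using gi0 i0 by linarith
      qed (use i0 in simp)
      moreover have "insert i0 Hi \<subseteq> {1..n}" using i0 Lo_def Hi_def by auto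
      ultimately have "insert i0 Hi \<subseteq> {j\<in>{1..n}. C < g j}" by auto
      then have "card (insert i0 Hi) \<le> card {j\<in>{1..n}. C < g j}" by (intro card_mono) auto
      moreover have "i0 \<notin> Hi" using i0 Lo_def Hi_def by auto
      then have "card (insert i0 Hi) = n - k + 1" using finHi cHi by simp
      moreover have "{j\<in>{1..n}. C < hs j} \<subseteq> {k+1..n}"
      proof
        fix j assume j: "j \<in> {j\<in>{1..n}. C < hs j}"
        have "\<not> j \<le> k" using hs_sorted[of j k] j hk kn by auto
        then show "j \<in> {k+1..n}" using j by auto
      qed
      then have "card {j\<in>{1..n}. C < hs j} \<le> card {k+1..n}" by (intro card_mono) auto
      ultimately show False using cnt_eq[of "\<lambda>x. C < x"] kn by simp
    qed
  qed
  have B: "(\<forall>i\<in>Hi. C \<le> g i) \<longleftrightarrow> C \<le> hs (k + 1)"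
  proof
    assume H: "\<forall>i\<in>Hi. C \<le> g i"
    show "C \<le> hs (k + 1)"
    proof (rule ccontr)
      assume "\<not> C \<le> hs (k + 1)"
      then have "hs j < C" if "j \<in> {1..k+1}" for j using hs_sorted[of j "k+1"] kn that by auto
      then have "{1..k+1} \<subseteq> {j\<in>{1..n}. hs j < C}" using kn by auto
      then have "card {1..k+1} \<le> card {j\<in>{1..n}. hs j < C}" by (intro card_mono) auto
      moreover have "{j\<in>{1..n}. g j < C} \<subseteq> Lo" using H Lo_def Hi_def by auto
      then have "card {j\<in>{1..n}. g j < C} \<le> card Lo" using finLo by (intro card_mono)
      ultimately show False using cnt_eq[of "\<lambda>x. x < C"] cLo by simp
    qed
  next
    assume hk: "C \<le> hs (k + 1)"
    show "\<forall>i\<in>Hi. C \<le> g i"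
    proof (rule ccontr)
      assume "\<not> (\<forall>i\<in>Hi. C \<le> g i)"
      then obtain i0 where i0: "i0 \<in> Hi" "g i0 < C" by auto
      have gi0: "h \<le> g i0" using i0 hHi unfolding Hi_def by blast
      have "g j < C" if "j \<in> insert i0 Lo" for j
      proof (cases "j = i0")
        case False
        then have "g j \<le> h" using that hLo unfolding Lo_def by blast
        then show ?thesis using gi0 i0 by linarith
      qed (use i0 in simp)
      moreover have "insert i0 Lo \<subseteq> {1..n}" using i0 Lo_def Hi_def by auto
      ultimately have "insert i0 Lo \<subseteq> {j\<in>{1..n}. g j < C}" by auto
      then have "card (insert i0 Lo) \<le> card {j\<in>{1..n}. g j < C}" by (intro card_mono) auto
      moreover have "i0 \<notin> Lo" using i0 Lo_def Hi_def by auto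
      then have "card (insert i0 Lo) = k + 1" using finLo cLo by simp
      moreover have "{j\<in>{1..n}. hs j < C} \<subseteq> {1..k}"
      proof
        fix j assume j: "j \<in> {j\<in>{1..n}. hs j < C}"
        have "\<not> k + 1 \<le> j" using hs_sorted[of "k+1" j] j hk k1 by auto
        then show "j \<in> {1..k}" using j by auto
      qed
      then have "card {j\<in>{1..n}. hs j < C} \<le> card {1..k}" by (intro card_mono) auto
      ultimately show False using cnt_eq[of "\<lambda>x. x < C"] by simp
    qed
  qed
  have "(\<forall>i\<in>{1..n}. (odd (n - i) \<longrightarrow> g i \<le> C) \<and> (even (n - i) \<longrightarrow> C \<le> g i))
        \<longleftrightarrow> (\<forall>i\<in>Lo. g i \<le> C) \<and> (\<forall>i\<in>Hi. C \<le> g i)"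
    unfolding Lo_def Hi_def by blast
  then show ?thesis using A B k_def by simp
qed

theorem theorem2p6:
  fixes p :: "real poly" and n :: nat and mu :: "nat \<Rightarrow> real"
    and hs :: "nat \<Rightarrow> real" and h C :: real
  assumes rr: "real_rooted p"
    and deg: "degree p = n" and n2: "n \<ge> 2"
    and lc: "lead_coeff p > 0"
    and mu_sorted: "\<And>i j. 1 \<le> i \<Longrightarrow> i \<le> j \<Longrightarrow> j \<le> n \<Longrightarrow> mu i \<le> mu j"
    and mu_roots: "p = smult (lead_coeff p) (\<Prod>i\<in>{1..n}. [:- mu i, 1:])"
    and hs_sorted: "\<And>i j. 1 \<le> i \<Longrightarrow> i \<le> j \<Longrightarrow> j \<le> n \<Longrightarrow> hs i \<le> hs j"
    and hs_mset: "mset (map hs [1..<Suc n]) =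
                  mset (map (\<lambda>i. - poly (poly_antideriv p) (mu i)) [1..<Suc n])"
    and h_bounds: "hs (n div 2) \<le> h" "h \<le> hs (n div 2 + 1)"
    and Ph: "real_rooted (poly_antideriv p + [:h:])"
  shows "real_rooted (poly_antideriv p + [:C:]) \<longleftrightarrow>
           hs (n div 2) \<le> C \<and> C \<le> hs (n div 2 + 1)"
proof -
  define P where "P = poly_antideriv p"
  define g where "g i = - poly P (mu i)" for i
  have charD: "real_rooted (P + [:D:]) \<longleftrightarrow>
      (\<forall>i\<in>{1..n}. (odd (n - i) \<longrightarrow> g i \<le> D) \<and> (even (n - i) \<longrightarrow> D \<le> g i))" for D
  proof -
    interpret setting "P + [:D:]" p "lead_coeff p" n mu
    proof
      show "pderiv (P + [:D:]) = p" by (simp add: P_def pderiv_add pderiv_antideriv pderiv_pCons)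
    qed (use mu_roots lc n2 mu_sorted in auto)
    have "SC \<longleftrightarrow> (\<forall>i\<in>{1..n}. (odd (n - i) \<longrightarrow> g i \<le> D) \<and> (even (n - i) \<longrightarrow> D \<le> g i))"
    proof -
      have e: "(0 \<le> poly (P + [:D:]) (mu i) \<longleftrightarrow> g i \<le> D) \<and> (poly (P + [:D:]) (mu i) \<le> 0 \<longleftrightarrow> D \<le> g i)" for i
        unfolding g_def by auto
      show ?thesis unfolding SC_def using e by simp
    qed
    then show ?thesis using char by simp
  qed
  have cnt_eq: "card {j\<in>{1..n}. Pr (hs j)} = card {j\<in>{1..n}. Pr (g j)}" for Pr
  proof -
    have m: "map g [1..<Suc n] = map (\<lambda>i. - poly (poly_antideriv p) (mu i)) [1..<Suc n]"
      by (simp add: g_def P_def del: upt_Suc)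
    have "card {j\<in>{1..n}. Pr (hs j)} = size (filter_mset Pr (mset (map hs [1..<Suc n])))"
      by (rule card_mset_map)
    also have "\<dots> = size (filter_mset Pr (mset (map g [1..<Suc n])))"
      by (simp only: hs_mset m)
    also have "\<dots> = card {j\<in>{1..n}. Pr (g j)}"
      by (rule card_mset_map[symmetric])
    finally show ?thesis .
  qed
  have hh: "\<forall>i\<in>{1..n}. (odd (n - i) \<longrightarrow> g i \<le> h) \<and> (even (n - i) \<longrightarrow> h \<le> g i)"
    using charD[of h] Ph P_def by simp
  show ?thesis
    using combinatorial[of n hs g h C, OF n2 hs_sorted cnt_eq] hh charD[of C] P_def by auto
qed

end
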